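(* Let $G$ be a graph, $R$ a connected subset of $V(G)$, $v_0\in V(G)$, and $P$ a shortest path from $v_0$ to $R$. Then the number of milestones of $P$ is at most $|R|^2+1$.
   Context: $G$ is an unweighted undirected graph with shortest-path distance $\mathrm{dist}$; $R$ is connected if $G[R]$ is connected. A shortest path from $v_0$ to $R$ is a path of length $\min_{y\in R}\mathrm{dist}(v_0,y)$ from $v_0$ to a vertex of $R$; let $x$ be its unique vertex in $R$. Order $V(P)$ by $v\le_P u$ iff $u$ lies on the subpath of $P$ from $v$ to $x$. For $z\in V(G)$, the distance profile $\operatorname{prof}_{R,x}[z]\colon R\to\mathbb{Z}$ is $\operatorname{prof}_{R,x}[z](s)=\mathrm{dist}(z,s)-\mathrm{dist}(z,x)$. A vertex $v\in V(P)$ is a milestone of $P$ if $v=x$ or $\operatorname{prof}_{R,x}[v]\ne\operatorname{prof}_{R,x}[u]$ where $u$ is the successor of $v$ in $\le_P$. *)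

theory Defs
  imports "HOL-Library.FuncSet"
begin

definition graph :: "'a set \<Rightarrow> ('a \<Rightarrow> 'a \<Rightarrow> bool) \<Rightarrow> bool" where
  "graph V E \<longleftrightarrow> finite V \<and> (\<forall>u v. E u v \<longrightarrow> u \<in> V \<and> v \<in> V)
     \<and> (\<forall>u v. E u v \<longrightarrow> E v u) \<and> (\<forall>v. \<not> E v v)"

text \<open>A walk is a nonempty list of vertices, consecutive ones adjacent;
its length (number of edges) is length minus one.\<close>
definition walk :: "'a set \<Rightarrow> ('a \<Rightarrow> 'a \<Rightarrow> bool) \<Rightarrow> 'a list \<Rightarrow> bool" where
  "walk V E xs \<longleftrightarrow> xs \<noteq> [] \<and> set xs \<subseteq> V \<and>
     (\<forall>i. Suc i < length xs \<longrightarrow> E (xs ! i) (xs ! Suc i))"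

text \<open>Shortest-path distance (meaningful for vertices joined by a walk).\<close>
definition dist :: "'a set \<Rightarrow> ('a \<Rightarrow> 'a \<Rightarrow> bool) \<Rightarrow> 'a \<Rightarrow> 'a \<Rightarrow> nat" where
  "dist V E u v = (LEAST n. \<exists>xs. walk V E xs \<and> hd xs = u \<and> last xs = v \<and> length xs = Suc n)"

definition connected_set :: "'a set \<Rightarrow> ('a \<Rightarrow> 'a \<Rightarrow> bool) \<Rightarrow> 'a set \<Rightarrow> bool" where
  "connected_set V E R \<longleftrightarrow> R \<subseteq> V \<and>
     (\<forall>u\<in>R. \<forall>v\<in>R. \<exists>xs. walk V E xs \<and> set xs \<subseteq> R \<and> hd xs = u \<and> last xs = v)"

definition shortest_path_to ::
  "'a set \<Rightarrow> ('a \<Rightarrow> 'a \<Rightarrow> bool) \<Rightarrow> 'a set \<Rightarrow> 'a \<Rightarrow> 'a list \<Rightarrow> bool" where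
  "shortest_path_to V E R v0 P \<longleftrightarrow> walk V E P \<and> distinct P \<and> hd P = v0 \<and> last P \<in> R \<and>
     (\<forall>W. walk V E W \<and> hd W = v0 \<and> last W \<in> R \<longrightarrow> length P \<le> length W)"

definition prof :: "'a set \<Rightarrow> ('a \<Rightarrow> 'a \<Rightarrow> bool) \<Rightarrow> 'a set \<Rightarrow> 'a \<Rightarrow> 'a \<Rightarrow> ('a \<Rightarrow> int)" where
  "prof V E R x z = (\<lambda>s\<in>R. int (dist V E z s) - int (dist V E z x))"

definition milestones :: "'a set \<Rightarrow> ('a \<Rightarrow> 'a \<Rightarrow> bool) \<Rightarrow> 'a set \<Rightarrow> 'a list \<Rightarrow> 'a set" where
  "milestones V E R P = {P ! i | i. i < length P \<and>
      (Suc i = length P \<or> prof V E R (last P) (P ! i) \<noteq> prof V E R (last P) (P ! Suc i))}"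

end

theory Submission
  imports Defs
begin

lemma walk_single[simp]: "walk V E [x] \<longleftrightarrow> x \<in> V"
  unfolding walk_def by auto

lemma walk_Cons2: "walk V E (x # y # xs) \<longleftrightarrow> x \<in> V \<and> E x y \<and> walk V E (y # xs)"
proof
  assume a: "walk V E (x # y # xs)"
  have h: "\<forall>i. Suc i < length (x#y#xs) \<longrightarrow> E ((x#y#xs) ! i) ((x#y#xs) ! Suc i)"
    and s: "set (x#y#xs) \<subseteq> V" using a unfolding walk_def by auto
  have "E x y" using h[rule_format, of 0] by simp
  moreover have "\<forall>i. Suc i < length (y#xs) \<longrightarrow> E ((y#xs) ! i) ((y#xs) ! Suc i)"
    using h by auto
  ultimately show "x \<in> V \<and> E x y \<and> walk V E (y # xs)"
    using s unfolding walk_def by auto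
next
  assume a: "x \<in> V \<and> E x y \<and> walk V E (y # xs)"
  show "walk V E (x # y # xs)"
    unfolding walk_def
  proof (intro conjI allI impI)
    fix i assume "Suc i < length (x # y # xs)"
    then show "E ((x # y # xs) ! i) ((x # y # xs) ! Suc i)"
      using a unfolding walk_def by (cases i) auto
  qed (use a in \<open>auto simp: walk_def\<close>)
qed

lemma walk_append:
  "xs \<noteq> [] \<Longrightarrow> ys \<noteq> [] \<Longrightarrow>
   walk V E (xs @ ys) \<longleftrightarrow> walk V E xs \<and> walk V E ys \<and> E (last xs) (hd ys)"
proof (induction xs)
  case Nil then show ?case by simp
next
  case (Cons a xs)
  show ?case
  proof (cases xs)
    case Nil
    then show ?thesis using Cons.prems
      by (cases ys) (auto simp: walk_Cons2)
  next
    case (Cons b zs)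
    then show ?thesis using Cons.IH Cons.prems
      by (auto simp: walk_Cons2)
  qed
qed

lemma walk_glue:
  assumes "walk V E (xs @ [y])" "walk V E (y # ys)"
  shows "walk V E (xs @ y # ys)"
proof (cases "xs = []")
  case True then show ?thesis using assms by simp
next
  case False
  then have "walk V E xs" "E (last xs) y" using assms(1) walk_append[of xs "[y]"] by auto
  then show ?thesis using walk_append[of xs "y # ys"] False assms(2) by auto
qed

lemma walk_concat:
  assumes "walk V E xs" "walk V E ys" "last xs = hd ys"
  shows "walk V E (xs @ tl ys)" "hd (xs @ tl ys) = hd xs" "last (xs @ tl ys) = last ys"
    "length (xs @ tl ys) = length xs + length ys - 1"
proof -
  have ne: "xs \<noteq> []" "ys \<noteq> []" using assms unfolding walk_def by auto
  have xs: "xs = butlast xs @ [last xs]" using ne by simp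
  have ys: "ys = hd ys # tl ys" using ne by simp
  have "walk V E (butlast xs @ last xs # tl ys)"
    by (rule walk_glue) (use assms xs ys in auto)
  moreover have "butlast xs @ last xs # tl ys = xs @ tl ys" using ne by simp
  ultimately show "walk V E (xs @ tl ys)" by simp
  show "hd (xs @ tl ys) = hd xs" using ne by simp
  show "last (xs @ tl ys) = last ys" using ne assms(3)
    by (metis last_ConsL last_ConsR last_appendL last_appendR list.collapse)
  show "length (xs @ tl ys) = length xs + length ys - 1" using ne by (cases ys) auto
qed

lemma dist_le:
  assumes "walk V E xs" "hd xs = u" "last xs = v"
  shows "dist V E u v \<le> length xs - 1"
proof -
  have "xs \<noteq> []" using assms unfolding walk_def by auto
  then have "length xs = Suc (length xs - 1)" by simp
  then show ?thesis unfolding dist_def using assms by (intro Least_le) blast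
qed

lemma dist_walk:
  assumes "walk V E xs" "hd xs = u" "last xs = v"
  shows "\<exists>ys. walk V E ys \<and> hd ys = u \<and> last ys = v \<and> length ys = Suc (dist V E u v)"
proof -
  have "xs \<noteq> []" using assms unfolding walk_def by auto
  then have "length xs = Suc (length xs - 1)" by simp
  then have "\<exists>n. \<exists>xs. walk V E xs \<and> hd xs = u \<and> last xs = v \<and> length xs = Suc n"
    using assms by blast
  then show ?thesis unfolding dist_def by (rule LeastI_ex)
qed

definition reach where "reach V E u v \<longleftrightarrow> (\<exists>xs. walk V E xs \<and> hd xs = u \<and> last xs = v)"

lemma reach_trans: "reach V E u v \<Longrightarrow> reach V E v w \<Longrightarrow> reach V E u w"
  unfolding reach_def by (metis walk_concat(1,2,3))

lemma dist_tri:
  assumes "reach V E u v" "reach V E v w"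
  shows "dist V E u w \<le> dist V E u v + dist V E v w"
proof -
  obtain xs where xs: "walk V E xs" "hd xs = u" "last xs = v" "length xs = Suc (dist V E u v)"
    using assms(1) dist_walk unfolding reach_def by metis
  obtain ys where ys: "walk V E ys" "hd ys = v" "last ys = w" "length ys = Suc (dist V E v w)"
    using assms(2) dist_walk unfolding reach_def by metis
  have "dist V E u w \<le> length (xs @ tl ys) - 1"
    using walk_concat[of V E xs ys] xs ys by (intro dist_le) auto
  then show ?thesis using xs ys walk_concat(4)[of V E xs ys] by simp
qed

lemma distinct_walk:
  "walk V E xs \<Longrightarrow> \<exists>ys. walk V E ys \<and> set ys \<subseteq> set xs \<and> hd ys = hd xs \<and> last ys = last xs \<and> distinct ys"
proof (induction "length xs" arbitrary: xs rule: less_induct)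
  case less
  show ?case
  proof (cases "distinct xs")
    case True then show ?thesis using less.prems by blast
  next
    case False
    then obtain a y b c where d: "xs = a @ [y] @ b @ [y] @ c"
      using not_distinct_decomp by blast
    have w1: "walk V E (a @ [y])"
      using less.prems d walk_append[of "a @ [y]" "b @ [y] @ c"] by auto
    have w2: "walk V E ([y] @ c)"
      using less.prems d walk_append[of "a @ [y] @ b" "[y] @ c"] by auto
    have w: "walk V E (a @ y # c)" using walk_glue w1 w2 by simp
    have "length (a @ y # c) < length xs" using d by simp
    then obtain ys where ys: "walk V E ys" "set ys \<subseteq> set (a @ y # c)" "hd ys = hd (a @ y # c)"
      "last ys = last (a @ y # c)" "distinct ys"
      using less.hyps w by blast
    have "hd (a @ y # c) = hd xs" using d by (cases a) auto
    moreover have "last (a @ y # c) = last xs" using d by (cases c) auto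
    moreover have "set (a @ y # c) \<subseteq> set xs" using d by auto
    ultimately show ?thesis using ys by (intro exI[of _ ys]) auto
  qed
qed

lemma dist_in_R:
  assumes "walk V E xs" "set xs \<subseteq> R" "finite R"
  shows "dist V E (hd xs) (last xs) \<le> card R"
proof -
  obtain ys where ys: "walk V E ys" "set ys \<subseteq> set xs" "hd ys = hd xs" "last ys = last xs" "distinct ys"
    using distinct_walk assms(1) by blast
  have "length ys = card (set ys)" using ys(5) by (simp add: distinct_card)
  also have "\<dots> \<le> card R" using ys(2) assms by (intro card_mono) auto
  finally show ?thesis using dist_le[OF ys(1,3,4)] by simp
qed

lemma count_changes:
  fixes F :: "nat \<Rightarrow> 'b \<Rightarrow> int"
  assumes "finite S" "\<forall>i<m. \<forall>s\<in>S. F i s \<le> F (Suc i) s"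
  shows "int (card {i. i < m \<and> (\<exists>s\<in>S. F i s \<noteq> F (Suc i) s)}) \<le> (\<Sum>s\<in>S. F m s - F 0 s)"
  using assms(2)
proof (induction m)
  case 0 then show ?case by simp
next
  case (Suc m)
  let ?A = "\<lambda>m. {i. i < m \<and> (\<exists>s\<in>S. F i s \<noteq> F (Suc i) s)}"
  have IH: "int (card (?A m)) \<le> (\<Sum>s\<in>S. F m s - F 0 s)" using Suc by auto
  have sp: "(\<Sum>s\<in>S. F (Suc m) s - F 0 s) = (\<Sum>s\<in>S. F m s - F 0 s) + (\<Sum>s\<in>S. F (Suc m) s - F m s)"
    by (simp add: sum.distrib[symmetric])
  have nn: "\<forall>s\<in>S. 0 \<le> F (Suc m) s - F m s" using Suc.prems by auto
  show ?case
  proof (cases "\<exists>s\<in>S. F m s \<noteq> F (Suc m) s")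
    case True
    then obtain s where s: "s \<in> S" "F m s \<noteq> F (Suc m) s" by blast
    have "1 \<le> F (Suc m) s - F m s" using s nn by force
    also have "\<dots> \<le> (\<Sum>s\<in>S. F (Suc m) s - F m s)"
      using s assms(1) nn by (intro member_le_sum) auto
    finally have g: "1 \<le> (\<Sum>s\<in>S. F (Suc m) s - F m s)" .
    have "?A (Suc m) = insert m (?A m)" using True by auto
    then have "card (?A (Suc m)) = Suc (card (?A m))" by simp
    then show ?thesis using IH sp g by simp
  next
    case False
    have "?A (Suc m) = ?A m" using False less_Suc_eq by auto
    moreover have "0 \<le> (\<Sum>s\<in>S. F (Suc m) s - F m s)" using nn by (intro sum_nonneg) auto
    ultimately show ?thesis using IH sp by simp
  qed
qed

theorem lemma3p2:
  fixes V :: "'a set" and E :: "'a \<Rightarrow> 'a \<Rightarrow> bool" and R :: "'a set" and v0 :: 'a and P :: "'a list"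
  assumes "graph V E" and "connected_set V E R" and "v0 \<in> V"
    and "shortest_path_to V E R v0 P"
  shows "card (milestones V E R P) \<le> (card R)\<^sup>2 + 1"
proof -
  have wP: "walk V E P" and hP: "hd P = v0" and lP: "last P \<in> R"
    and minP: "\<And>W. walk V E W \<Longrightarrow> hd W = v0 \<Longrightarrow> last W \<in> R \<Longrightarrow> length P \<le> length W"
    using assms(4) unfolding shortest_path_to_def by auto
  have Pne: "P \<noteq> []" using wP unfolding walk_def by auto
  define m where "m = length P - 1"
  define x where "x = last P"
  have lenP: "length P = Suc m" using Pne m_def by simp
  have xm: "P ! m = x" using Pne by (simp add: x_def m_def last_conv_nth)
  have finR: "finite R" using assms(1,2) unfolding graph_def connected_set_def
    by (meson finite_subset)
  have Rc: "\<And>u v. u \<in> R \<Longrightarrow> v \<in> R \<Longrightarrow> \<exists>xs. walk V E xs \<and> set xs \<subseteq> R \<and> hd xs = u \<and> last xs = v"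
    using assms(2) unfolding connected_set_def by blast
  have xR: "x \<in> R" using lP x_def by simp
  have wdrop: "walk V E (drop i P)" if "i \<le> m" for i
  proof -
    have "drop i P \<noteq> []" using that lenP by simp
    moreover have "set (drop i P) \<subseteq> V" using wP set_drop_subset unfolding walk_def by fast
    moreover have "E (drop i P ! j) (drop i P ! Suc j)" if "Suc j < length (drop i P)" for j
    proof -
      have "Suc (i + j) < length P" using that by simp
      then have "E (P ! (i+j)) (P ! Suc (i+j))" using wP unfolding walk_def by blast
      then show ?thesis using that by simp
    qed
    ultimately show ?thesis unfolding walk_def by blast
  qed
  have hdrop: "hd (drop i P) = P ! i" if "i \<le> m" for i using that lenP by (simp add: hd_drop_conv_nth)
  have ldrop: "last (drop i P) = x" if "i \<le> m" for i using that lenP x_def by simp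
  have wtake: "walk V E (take (Suc i) P)" if "i \<le> m" for i
  proof -
    have "take (Suc i) P \<noteq> []" using that lenP Pne by simp
    moreover have "set (take (Suc i) P) \<subseteq> V" using wP set_take_subset unfolding walk_def by fast
    moreover have "E (take (Suc i) P ! j) (take (Suc i) P ! Suc j)" if "Suc j < length (take (Suc i) P)" for j
    proof -
      have "Suc j < length P" using that by simp
      then have "E (P ! j) (P ! Suc j)" using wP unfolding walk_def by blast
      then show ?thesis using that by simp
    qed
    ultimately show ?thesis unfolding walk_def by blast
  qed
  have htake: "hd (take (Suc i) P) = v0" for i using hP Pne by (cases P) auto
  have ltake: "last (take (Suc i) P) = P ! i" if "i \<le> m" for i
    using that lenP Pne by (simp add: take_Suc_conv_app_nth)
  have reach_x: "reach V E (P ! i) x" if "i \<le> m" for i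
    unfolding reach_def using wdrop[OF that] hdrop[OF that] ldrop[OF that] by (intro exI[of _ "drop i P"]) simp
  have reach_R: "reach V E x s" if "s \<in> R" for s
    using Rc[OF xR that] unfolding reach_def by (elim exE) (intro exI, blast)
  have reach_s: "reach V E (P ! i) s" if "i \<le> m" "s \<in> R" for i s
    by (rule reach_trans[OF reach_x[OF that(1)] reach_R[OF that(2)]])
  have A: "m \<le> i + dist V E (P ! i) s" if hi: "i \<le> m" and hs: "s \<in> R" for i s
  proof -
    obtain W where W: "walk V E W" "hd W = P ! i" "last W = s" "length W = Suc (dist V E (P ! i) s)"
      using reach_s[OF hi hs] dist_walk unfolding reach_def by metis
    note c = walk_concat[of V E "take (Suc i) P" W]
    have "length P \<le> length (take (Suc i) P @ tl W)"
      using c wtake[OF hi] W ltake[OF hi] htake hs by (intro minP) auto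
    then show ?thesis using c(4) wtake[OF hi] W ltake[OF hi] hi hs lenP by simp
  qed
  have B: "dist V E (P ! i) x \<le> m - i" if "i \<le> m" for i
    using dist_le[OF wdrop[OF that] hdrop[OF that] ldrop[OF that]] lenP by simp
  have Dx: "dist V E (P ! i) x = m - i" if "i \<le> m" for i
    using A[OF that xR] B[OF that] by simp
  have step: "dist V E (P ! i) s \<le> 1 + dist V E (P ! Suc i) s" if "i < m" "s \<in> R" for i s
  proof -
    have w2: "walk V E [P ! i, P ! Suc i]"
      using wP that lenP unfolding walk_def by (auto simp: walk_def)
    have r: "reach V E (P ! i) (P ! Suc i)" using w2 unfolding reach_def by force
    have "dist V E (P ! i) (P ! Suc i) \<le> 1" using dist_le[OF w2] by simp
    then show ?thesis using dist_tri[OF r reach_s[of "Suc i" s]] that by simp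
  qed
  have dR: "dist V E x s \<le> card R" if hs: "s \<in> R" for s
  proof -
    obtain xs where "walk V E xs" "set xs \<subseteq> R" "hd xs = x" "last xs = s" using Rc[OF xR hs] by blast
    then show ?thesis using dist_in_R[of V E xs R] finR by simp
  qed
  define F where "F i s = prof V E R x (P ! i) s" for i s
  have Fv: "F i s = int (dist V E (P ! i) s) - int (m - i)" if "i \<le> m" "s \<in> R" for i s
    using that Dx unfolding F_def prof_def by simp
  have mono: "\<forall>i<m. \<forall>s\<in>R. F i s \<le> F (Suc i) s"
    using Fv step by fastforce
  have F0: "0 \<le> F 0 s" if "s \<in> R" for s using Fv[of 0 s] A[of 0 s] that by simp
  have Fm: "F m s \<le> int (card R)" if "s \<in> R" for s using Fv[of m s] dR[of s] that xm by simp
  let ?J = "{i. i < m \<and> (\<exists>s\<in>R. F i s \<noteq> F (Suc i) s)}"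
  have cJ: "int (card ?J) \<le> (\<Sum>s\<in>R. F m s - F 0 s)" by (rule count_changes[OF finR mono])
  also have "\<dots> \<le> (\<Sum>s\<in>R. int (card R))" using F0 Fm by (intro sum_mono) force
  also have "\<dots> = int (card R * card R)" by simp
  finally have cJ': "card ?J \<le> card R * card R" by linarith
  have eqv: "prof V E R x (P ! i) \<noteq> prof V E R x (P ! Suc i) \<longleftrightarrow> (\<exists>s\<in>R. F i s \<noteq> F (Suc i) s)" for i
    unfolding F_def prof_def by (auto simp: fun_eq_iff)
  have "milestones V E R P \<subseteq> (\<lambda>i. P ! i) ` insert m ?J"
    unfolding milestones_def using lenP eqv x_def by (auto simp: less_Suc_eq)
  then have "card (milestones V E R P) \<le> card ((\<lambda>i. P ! i) ` insert m ?J)"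
    by (intro card_mono) auto
  also have "\<dots> \<le> card (insert m ?J)" by (rule card_image_le) auto
  also have "\<dots> \<le> Suc (card ?J)" by (simp add: card_insert_le_m1)
  finally show ?thesis using cJ' by (simp add: power2_eq_square)
qed

end
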